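(* Let $\mu=(d_1,d_2,\dots)$ be a sequence of positive integers and let $\{R_i\mid i\in I\}$ be a collection of $*$-regular subrings of $\mathcal{M}^{alg}_\mu$. Then $\bigcap_{i\in I}R_i$ is also a $*$-regular subring of $\mathcal{M}^{alg}_\mu$.
   Context: A ring is von Neumann regular if every principal right ideal is generated by an idempotent; a $*$-regular ring is a regular ring with involution in which $a^*a=0$ implies $a=0$; a $*$-regular subring is a subring closed under the involution which is itself $*$-regular. Fix a nonprincipal ultrafilter $\omega$ on $\mathbb{N}$. Let $\mathcal{J}$ be the ideal of $\prod_n\mathrm{Mat}_{d_n\times d_n}(\mathbb{C})$ consisting of sequences $(a_n)$ with $\lim_\omega\mathrm{rank}(a_n)/d_n=0$, and $\mathcal{M}^{alg}_\mu=\prod_n\mathrm{Mat}_{d_n\times d_n}(\mathbb{C})/\mathcal{J}$ with involution induced by coordinatewise conjugate transpose. *)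

theory Defs
  imports "HOL-Algebra.QuotRing" "HOL-Algebra.Subrings"
    "Jordan_Normal_Form.Schur_Decomposition" "Jordan_Normal_Form.DL_Rank"
begin

definition is_ultrafilter :: "'a filter \<Rightarrow> bool" where
  "is_ultrafilter F \<longleftrightarrow> F \<noteq> bot \<and> (\<forall>P. eventually P F \<or> eventually (\<lambda>x. \<not> P x) F)"

definition nonprincipal :: "'a filter \<Rightarrow> bool" where
  "nonprincipal F \<longleftrightarrow> (\<forall>x. \<not> eventually (\<lambda>y. y = x) F)"

definition mrank :: "complex mat \<Rightarrow> nat" where
  "mrank A = vec_space.rank (dim_row A) A"

definition prod_mat_ring :: "(nat \<Rightarrow> nat) \<Rightarrow> (nat \<Rightarrow> complex mat) ring" where
  "prod_mat_ring d =
     \<lparr>carrier = {a. \<forall>n. a n \<in> carrier_mat (d n) (d n)},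
      monoid.mult = (\<lambda>a b n. a n * b n),
      one = (\<lambda>n. 1\<^sub>m (d n)),
      zero = (\<lambda>n. 0\<^sub>m (d n) (d n)),
      add = (\<lambda>a b n. a n + b n)\<rparr>"

definition null_ideal :: "nat filter \<Rightarrow> (nat \<Rightarrow> nat) \<Rightarrow> (nat \<Rightarrow> complex mat) set" where
  "null_ideal \<omega> d = {a \<in> carrier (prod_mat_ring d).
      ((\<lambda>n. real (mrank (a n)) / real (d n)) \<longlongrightarrow> 0) \<omega>}"

definition M_alg :: "nat filter \<Rightarrow> (nat \<Rightarrow> nat) \<Rightarrow> (nat \<Rightarrow> complex mat) set ring" where
  "M_alg \<omega> d = prod_mat_ring d Quot null_ideal \<omega> d"

definition alg_star :: "(nat \<Rightarrow> complex mat) set \<Rightarrow> (nat \<Rightarrow> complex mat) set" where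
  "alg_star X = (\<lambda>a n. mat_adjoint (a n)) ` X"

definition vN_regular_sub :: "('a, 'b) ring_scheme \<Rightarrow> 'a set \<Rightarrow> bool" where
  "vN_regular_sub R S \<longleftrightarrow> (\<forall>a\<in>S. \<exists>e\<in>S. e \<otimes>\<^bsub>R\<^esub> e = e \<and>
       {a \<otimes>\<^bsub>R\<^esub> r | r. r \<in> S} = {e \<otimes>\<^bsub>R\<^esub> r | r. r \<in> S})"

definition star_regular_subring :: "nat filter \<Rightarrow> (nat \<Rightarrow> nat) \<Rightarrow> (nat \<Rightarrow> complex mat) set set \<Rightarrow> bool" where
  "star_regular_subring \<omega> d S \<longleftrightarrow>
     subring S (M_alg \<omega> d) \<and>
     (\<forall>x\<in>S. alg_star x \<in> S) \<and>
     vN_regular_sub (M_alg \<omega> d) S \<and>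
     (\<forall>x\<in>S. alg_star x \<otimes>\<^bsub>M_alg \<omega> d\<^esub> x = \<zero>\<^bsub>M_alg \<omega> d\<^esub> \<longrightarrow> x = \<zero>\<^bsub>M_alg \<omega> d\<^esub>)"

end

theory Submission
  imports Defs
begin

lemma (in vec_space) rank_mono_span:
  assumes A: "A \<in> carrier_mat n na" and B: "B \<in> carrier_mat n nb"
    and sub: "set (cols A) \<subseteq> span (set (cols B))"
  shows "rank A \<le> rank B"
proof -
  define W where "W = span (set (cols B))"
  have sW: "subspace class_ring W V"
    unfolding W_def using B cols_dim carrier_matD(1) span_is_subspace by metis
  have "span (set (cols A)) \<subseteq> W"
    unfolding W_def using sub span_is_subset B
    by (metis cols_dim carrier_matD(1) span_is_submodule)
  moreover have sA: "subspace class_ring (span (set (cols A))) V"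
    using A cols_dim carrier_matD(1) span_is_subspace by metis
  ultimately have sub2: "subspace class_ring (span (set (cols A))) (vs W)"
    using nested_subspaces[OF sW sA] by blast
  have fd: "vectorspace.fin_dim class_ring (vs W)" unfolding W_def using fin_dim_span_cols B by blast
  show ?thesis unfolding rank_def W_def[symmetric]
    using vectorspace.subspace_dim[OF subspace_is_vs[OF sW] sub2 fd] fin_dim_span_cols[OF A] by auto
qed


lemma (in vec_space) rank_mult_le:
  assumes C: "C \<in> carrier_mat n r" and D: "D \<in> carrier_mat r m"
  shows "rank (C * D) \<le> r"
proof -
  have CD: "C * D \<in> carrier_mat n m" using C D by auto
  have "set (cols (C * D)) \<subseteq> span (set (cols C))"
  proof
    fix v assume "v \<in> set (cols (C * D))"
    then obtain j where j: "j < m" "v = col (C * D) j"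
      using CD by (metis cols_length cols_nth in_set_conv_nth carrier_matD(2))
    have "v = C *\<^sub>v col D j" using j C D by (auto simp: mult_mat_vec_def)
    moreover have "col D j \<in> carrier_vec (dim_col C)" using C D j by auto
    ultimately have "v \<in> col_space C" using col_space_eq[OF C] C by auto
    then show "v \<in> span (set (cols C))" unfolding col_space_def .
  qed
  then have "rank (C * D) \<le> rank C" by (rule rank_mono_span[OF CD C])
  also have "\<dots> \<le> r" using rank_le_nc[OF C] .
  finally show ?thesis .
qed

lemma (in vec_space) rank_factor:
  assumes A: "A \<in> carrier_mat n m"
  shows "\<exists>C D. C \<in> carrier_mat n (rank A) \<and> D \<in> carrier_mat (rank A) m \<and> A = C * D"
proof -
  obtain S where S: "maximal S (\<lambda>T. T \<subseteq> set (cols A) \<and> lin_indpt T)"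
    using maximal_exists[of "(\<lambda>T. T \<subseteq> set (cols A) \<and> lin_indpt T)" "card (set (cols A))" "{}"]
    by (meson List.finite_set card_mono empty_iff empty_subsetI finite_lin_indpt2 rev_finite_subset)
  have rk: "rank A = card S" using rank_card_indpt[OF A S] .
  have Ssub: "S \<subseteq> set (cols A)" and Sli: "lin_indpt S" using S unfolding maximal_def by auto
  have colsA: "set (cols A) \<subseteq> carrier_vec n" using A cols_dim carrier_matD(1) by metis
  have fS: "finite S" using Ssub finite_subset by blast
  obtain ws where ws: "set ws = S" "distinct ws" using finite_distinct_list[OF fS] by blast
  have lws: "length ws = rank A" using rk ws distinct_card by metis
  define C where "C = mat_of_cols n ws"
  have C: "C \<in> carrier_mat n (rank A)" unfolding C_def using lws by (metis mat_of_cols_carrier(1))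
  have wsc: "set ws \<subseteq> carrier_vec n" using ws Ssub colsA by auto
  have insp: "col A j \<in> span S" if j: "j < m" for j
  proof (rule ccontr)
    assume nin: "col A j \<notin> span S"
    have cj: "col A j \<in> set (cols A)" using j A by (metis cols_length cols_nth nth_mem carrier_matD(2))
    have cjc: "col A j \<in> carrier_vec n" using cj colsA by auto
    have "col A j \<notin> S" using nin span_mem Ssub colsA by (meson in_own_span subset_trans)
    then have "lin_indpt (S \<union> {col A j})"
      using lin_dep_iff_in_span[OF _ Sli cjc] nin Ssub colsA by auto
    moreover have "S \<union> {col A j} \<subseteq> set (cols A)" using Ssub cj by auto
    ultimately have "S \<union> {col A j} = S" using S unfolding maximal_def by blast
    then show False using \<open>col A j \<notin> S\<close> by auto
  qed
  have ex: "\<exists>x. x \<in> carrier_vec (rank A) \<and> C *\<^sub>v x = col A j" if j: "j < m" for j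
  proof -
    have "col A j \<in> col_space C" unfolding col_space_def C_def using wsc ws insp[OF j] by simp
    then show ?thesis using col_space_eq[OF C] C by auto
  qed
  then obtain x where x: "\<And>j. j < m \<Longrightarrow> x j \<in> carrier_vec (rank A) \<and> C *\<^sub>v x j = col A j"
    by metis
  define D where "D = mat_of_cols (rank A) (map x [0..<m])"
  have D: "D \<in> carrier_mat (rank A) m" unfolding D_def by (metis length_map diff_zero length_upt mat_of_cols_carrier(1))
  have colD: "col D j = x j" if "j < m" for j
  proof -
    have xj: "x j \<in> carrier_vec (rank A)" using x that by blast
    show ?thesis unfolding D_def using that xj by (auto simp: mat_of_cols_def intro!: eq_vecI)
  qed
  have "A = C * D"
  proof (rule eq_matI)
    fix i j assume i: "i < dim_row (C * D)" and j: "j < dim_col (C * D)"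
    have ij: "i < n" "j < m" using i j C D by auto
    have "(C * D) $$ (i, j) = row C i \<bullet> col D j" using ij C D by simp
    also have "\<dots> = (C *\<^sub>v col D j) $ i" using ij C by simp
    also have "\<dots> = col A j $ i" using x[OF ij(2)] colD[OF ij(2)] by simp
    also have "\<dots> = A $$ (i, j)" using ij A by simp
    finally show "A $$ (i, j) = (C * D) $$ (i, j)" by simp
  qed (use A C D in auto)
  then show ?thesis using C D by blast
qed


locale srng = ring R for R (structure) +
  fixes s :: "'a \<Rightarrow> 'a"
  assumes s_closed: "x \<in> carrier R \<Longrightarrow> s x \<in> carrier R"
    and s_s: "x \<in> carrier R \<Longrightarrow> s (s x) = x"
    and s_mult: "x \<in> carrier R \<Longrightarrow> y \<in> carrier R \<Longrightarrow> s (x \<otimes> y) = s y \<otimes> s x"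
    and s_add: "x \<in> carrier R \<Longrightarrow> y \<in> carrier R \<Longrightarrow> s (x \<oplus> y) = s x \<oplus> s y"
begin

lemma s_zero: "s \<zero> = \<zero>"
proof -
  have "s \<zero> = s (\<zero> \<oplus> \<zero>)" by simp
  also have "\<dots> = s \<zero> \<oplus> s \<zero>" using s_add[of \<zero> \<zero>] by simp
  finally have "s \<zero> \<oplus> \<zero> = s \<zero> \<oplus> s \<zero>" using s_closed[of \<zero>] by simp
  then show ?thesis using s_closed[of \<zero>] by (metis zero_closed add.l_cancel_one' r_zero)
qed

lemma s_neg: "x \<in> carrier R \<Longrightarrow> s (\<ominus> x) = \<ominus> s x"
proof -
  assume x: "x \<in> carrier R"
  have "s (\<ominus> x) \<oplus> s x = s (\<ominus> x \<oplus> x)" by (rule s_add[symmetric]) (use x in auto)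
  also have "\<dots> = \<zero>" using x by (simp add: l_neg s_zero)
  finally have "s (\<ominus> x) \<oplus> s x = \<zero>" .
  then show ?thesis using x s_closed by (metis a_inv_closed add.inv_equality)
qed

lemma s_minus: "x \<in> carrier R \<Longrightarrow> y \<in> carrier R \<Longrightarrow> s (x \<ominus> y) = s x \<ominus> s y"
  by (simp add: a_minus_def s_add s_neg)

lemma s_mult3: "x \<in> carrier R \<Longrightarrow> y \<in> carrier R \<Longrightarrow> z \<in> carrier R \<Longrightarrow>
   s (x \<otimes> y \<otimes> z) = s z \<otimes> s y \<otimes> s x"
  by (simp add: s_mult s_closed m_assoc)

definition MP :: "'a \<Rightarrow> 'a \<Rightarrow> bool" where
  "MP a x \<longleftrightarrow> a \<otimes> x \<otimes> a = a \<and> x \<otimes> a \<otimes> x = x \<and> s (a \<otimes> x) = a \<otimes> x \<and> s (x \<otimes> a) = x \<otimes> a"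

lemma MP_unique:
  assumes a: "a \<in> carrier R" and x: "x \<in> carrier R" and y: "y \<in> carrier R"
    and mx: "MP a x" and my: "MP a y"
  shows "x = y"
proof -
  note c = a x y s_closed[OF a] s_closed[OF x] s_closed[OF y]
  have 1: "a \<otimes> x \<otimes> a = a" "x \<otimes> a \<otimes> x = x" "s (a \<otimes> x) = a \<otimes> x" "s (x \<otimes> a) = x \<otimes> a"
    using mx unfolding MP_def by auto
  have 2: "a \<otimes> y \<otimes> a = a" "y \<otimes> a \<otimes> y = y" "s (a \<otimes> y) = a \<otimes> y" "s (y \<otimes> a) = y \<otimes> a"
    using my unfolding MP_def by auto
  have sa: "s a = s a \<otimes> s y \<otimes> s a" using 2(1) c s_mult3 by metis
  have sa': "s a = s a \<otimes> s x \<otimes> s a" using 1(1) c s_mult3 by metis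
  have "x = x \<otimes> (a \<otimes> x)" using 1(2) c by (simp add: m_assoc)
  also have "\<dots> = x \<otimes> (s x \<otimes> s a)" using 1(3) c by (simp add: s_mult)
  also have "\<dots> = x \<otimes> (s x \<otimes> (s a \<otimes> s y \<otimes> s a))" using sa by simp
  also have "\<dots> = x \<otimes> (s x \<otimes> s a) \<otimes> (s y \<otimes> s a)" using c by (simp add: m_assoc)
  also have "\<dots> = x \<otimes> (a \<otimes> x) \<otimes> (a \<otimes> y)" using 1(3) 2(3) c by (simp add: s_mult)
  also have "\<dots> = x \<otimes> a \<otimes> y" using 1(2) c by (simp add: m_assoc)
  finally have ex: "x = x \<otimes> a \<otimes> y" .
  have "y = (y \<otimes> a) \<otimes> y" using 2(2) by simp
  also have "\<dots> = (s a \<otimes> s y) \<otimes> y" using 2(4) c by (simp add: s_mult)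
  also have "\<dots> = ((s a \<otimes> s x \<otimes> s a) \<otimes> s y) \<otimes> y" using sa' by simp
  also have "\<dots> = (s a \<otimes> s x) \<otimes> (s a \<otimes> s y) \<otimes> y" using c by (simp add: m_assoc)
  also have "\<dots> = (x \<otimes> a) \<otimes> (y \<otimes> a) \<otimes> y" using 1(4) 2(4) c by (simp add: s_mult)
  also have "\<dots> = x \<otimes> a \<otimes> y" using 2(2) c by (simp add: m_assoc)
  finally show ?thesis using ex by simp
qed


lemma rdiff: "x \<in> carrier R \<Longrightarrow> y \<in> carrier R \<Longrightarrow> z \<in> carrier R \<Longrightarrow>
   x \<otimes> (y \<ominus> z) = x \<otimes> y \<ominus> x \<otimes> z"
  by (simp add: a_minus_def r_distr r_minus)

lemma ldiff: "x \<in> carrier R \<Longrightarrow> y \<in> carrier R \<Longrightarrow> z \<in> carrier R \<Longrightarrow>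
   (y \<ominus> z) \<otimes> x = y \<otimes> x \<ominus> z \<otimes> x"
  by (simp add: a_minus_def l_distr l_minus)

lemma diff_self: "x \<in> carrier R \<Longrightarrow> x \<ominus> x = \<zero>"
  by (simp add: a_minus_def r_neg)

lemma diff_eq0: "x \<in> carrier R \<Longrightarrow> y \<in> carrier R \<Longrightarrow> x \<ominus> y = \<zero> \<Longrightarrow> x = y"
proof -
  assume xy: "x \<in> carrier R" "y \<in> carrier R" "x \<ominus> y = \<zero>"
  have "x = (x \<ominus> y) \<oplus> y" using xy(1,2) by (simp add: a_minus_def a_assoc l_neg)
  also have "\<dots> = y" using xy by simp
  finally show "x = y" .
qed

end

locale sreg = srng +
  fixes S
  assumes S_sub: "subring S R"
    and S_s: "\<And>x. x \<in> S \<Longrightarrow> s x \<in> S"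
    and S_reg: "vN_regular_sub R S"
    and S_prop: "\<And>x. x \<in> S \<Longrightarrow> s x \<otimes> x = \<zero> \<Longrightarrow> x = \<zero>"
begin

lemma SC: "x \<in> S \<Longrightarrow> x \<in> carrier R"
  using subringE(1)[OF S_sub] by auto

lemma S_mult: "x \<in> S \<Longrightarrow> y \<in> S \<Longrightarrow> x \<otimes> y \<in> S"
  using subringE(6)[OF S_sub] by auto

lemma S_minus: "x \<in> S \<Longrightarrow> y \<in> S \<Longrightarrow> x \<ominus> y \<in> S"
  using subringE(5,7)[OF S_sub] by (simp add: a_minus_def)

lemma S_one: "\<one> \<in> S"
  using subringE(3)[OF S_sub] .

lemma S_regular: "a \<in> S \<Longrightarrow> \<exists>r\<in>S. a \<otimes> r \<otimes> a = a"
proof -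
  assume a: "a \<in> S"
  obtain e where e: "e \<in> S" "e \<otimes> e = e" "{a \<otimes> r | r. r \<in> S} = {e \<otimes> r | r. r \<in> S}"
    using S_reg a unfolding vN_regular_sub_def by blast
  have "a \<in> {a \<otimes> r | r. r \<in> S}" using a S_one SC by (metis (mono_tags, lifting) mem_Collect_eq r_one)
  then obtain t where t: "t \<in> S" "a = e \<otimes> t" using e(3) by auto
  have "e \<in> {a \<otimes> r | r. r \<in> S}" using e S_one SC by (metis (mono_tags, lifting) mem_Collect_eq r_one)
  then obtain r where r: "r \<in> S" "e = a \<otimes> r" by auto
  have "a \<otimes> r \<otimes> a = e \<otimes> a" using r(2) by simp
  also have "\<dots> = e \<otimes> (e \<otimes> t)" using t(2) by simp
  also have "\<dots> = e \<otimes> t" using e t SC by (simp flip: m_assoc)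
  also have "\<dots> = a" using t(2) by simp
  finally show ?thesis using r(1) by blast
qed

lemma S_cancel: "y \<in> S \<Longrightarrow> y \<otimes> s y = \<zero> \<Longrightarrow> y = \<zero>"
proof -
  assume y: "y \<in> S" and h: "y \<otimes> s y = \<zero>"
  have "s (s y) \<otimes> s y = \<zero>" using h y SC s_s by simp
  then have "s y = \<zero>" using S_prop S_s y by blast
  then show "y = \<zero>" using s_s SC y s_zero by metis
qed

end

context sreg begin
lemma S_left: "a \<in> S \<Longrightarrow> \<exists>u\<in>S. a = u \<otimes> s a \<otimes> a"
proof -
  assume aS: "a \<in> S"
  define b where "b = s a \<otimes> a"
  have bS: "b \<in> S" unfolding b_def by (intro S_mult S_s aS)
  obtain y where yS: "y \<in> S" and yb: "b \<otimes> y \<otimes> b = b" using S_regular bS by blast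
  have a: "a \<in> carrier R" and b: "b \<in> carrier R" and y: "y \<in> carrier R" and sa: "s a \<in> carrier R"
    using aS bS yS SC s_closed by auto
  have sy: "s y \<in> carrier R" using y s_closed by auto
  have sb: "s b = b" unfolding b_def using a sa s_mult s_s by simp
  define t where "t = a \<ominus> a \<otimes> y \<otimes> b"
  have tS: "t \<in> S" unfolding t_def by (intro S_minus S_mult aS yS bS)
  have t: "t \<in> carrier R" using tS SC by auto
  have st: "s t = s a \<ominus> b \<otimes> s y \<otimes> s a"
    unfolding t_def using a y b sb by (simp add: s_minus s_mult3)
  have "s a \<otimes> t = s a \<otimes> a \<ominus> s a \<otimes> (a \<otimes> y \<otimes> b)" unfolding t_def using a y b sa by (simp add: rdiff)
  also have "\<dots> = b \<ominus> b \<otimes> y \<otimes> b" unfolding b_def using a y sa by (simp add: m_assoc)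
  also have "\<dots> = \<zero>" using yb b by (simp add: diff_self)
  finally have sat: "s a \<otimes> t = \<zero>" .
  have "s t \<otimes> t = s a \<otimes> t \<ominus> (b \<otimes> s y \<otimes> s a) \<otimes> t" unfolding st using a b sy sa t by (simp add: ldiff)
  also have "\<dots> = \<zero>" using sat a b sy sa t by (simp add: m_assoc)
  finally have "t = \<zero>" using S_prop tS by blast
  then have "a = a \<otimes> y \<otimes> b" unfolding t_def using a y b diff_eq0[of a "a \<otimes> y \<otimes> b"] by simp
  then have "a = (a \<otimes> y) \<otimes> s a \<otimes> a" unfolding b_def using a y sa by (simp add: m_assoc)
  moreover have "a \<otimes> y \<in> S" by (intro S_mult aS yS)
  ultimately show ?thesis by blast
qed

end

context sreg begin
lemma S_MP: "a \<in> S \<Longrightarrow> \<exists>x\<in>S. MP a x"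
proof -
  assume aS: "a \<in> S"
  obtain u where uS: "u \<in> S" and u: "a = u \<otimes> s a \<otimes> a" using S_left aS by blast
  obtain u' where u'S: "u' \<in> S" and u': "s a = u' \<otimes> s (s a) \<otimes> s a" using S_left S_s aS by blast
  have a: "a \<in> carrier R" and sa: "s a \<in> carrier R" and uc: "u \<in> carrier R" and u'c: "u' \<in> carrier R"
    using aS uS u'S SC s_closed by auto
  define v where "v = s u'"
  have vS: "v \<in> S" unfolding v_def using u'S S_s by blast
  have vc: "v \<in> carrier R" using vS SC by auto
  have su: "s u \<in> carrier R" and sv: "s v \<in> carrier R" using uc vc s_closed by auto
  have u2: "s a = u' \<otimes> a \<otimes> s a" using u' s_s[OF a] by metis
  have v: "a = a \<otimes> s a \<otimes> v"
  proof -
    have "a = s (s a)" using a s_s by simp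
    also have "\<dots> = s (u' \<otimes> a \<otimes> s a)" using u2 by (rule arg_cong)
    also have "\<dots> = a \<otimes> s a \<otimes> v" unfolding v_def using a sa u'c s_s by (simp add: s_mult3)
    finally show ?thesis .
  qed
  have u1: "s a = s a \<otimes> a \<otimes> s u"
  proof -
    have "s a = s (u \<otimes> s a \<otimes> a)" using u by (rule arg_cong)
    also have "\<dots> = s a \<otimes> a \<otimes> s u" using a sa uc s_s by (simp add: s_mult3)
    finally show ?thesis .
  qed
  have v1: "s a = s v \<otimes> a \<otimes> s a"
  proof -
    have "s a = s (a \<otimes> s a \<otimes> v)" using v by (rule arg_cong)
    also have "\<dots> = s v \<otimes> a \<otimes> s a" using a sa vc s_s by (simp add: s_mult3)
    finally show ?thesis .
  qed
  define w where "w = a \<otimes> s v \<otimes> a \<ominus> a"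
  have wS: "w \<in> S" unfolding w_def by (intro S_minus S_mult S_s aS vS)
  have wc: "w \<in> carrier R" using wS SC by auto
  have wsa: "w \<otimes> s a = \<zero>"
  proof -
    have "w \<otimes> s a = a \<otimes> (s v \<otimes> a \<otimes> s a) \<ominus> a \<otimes> s a" unfolding w_def using a sa sv by (simp add: ldiff m_assoc)
    also have "\<dots> = \<zero>" using v1[symmetric] a sa by (simp add: diff_self)
    finally show ?thesis .
  qed
  have sw: "s w = s a \<otimes> v \<otimes> s a \<ominus> s a" unfolding w_def using a sv vc s_s by (simp add: s_minus s_mult3)
  have "w \<otimes> s w = (w \<otimes> s a) \<otimes> v \<otimes> s a \<ominus> w \<otimes> s a" unfolding sw using wc sa vc by (simp add: rdiff m_assoc)
  also have "\<dots> = \<zero>" using wsa sa vc by simp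
  finally have "w = \<zero>" using S_cancel wS by blast
  then have ava: "a \<otimes> s v \<otimes> a = a" unfolding w_def using a sv diff_eq0[of "a \<otimes> s v \<otimes> a" a] by simp
  define w' where "w' = a \<otimes> s u \<otimes> a \<ominus> a"
  have w'S: "w' \<in> S" unfolding w'_def by (intro S_minus S_mult S_s aS uS)
  have w'c: "w' \<in> carrier R" using w'S SC by auto
  have saw: "s a \<otimes> w' = \<zero>"
  proof -
    have "s a \<otimes> w' = (s a \<otimes> a \<otimes> s u) \<otimes> a \<ominus> s a \<otimes> a" unfolding w'_def using a sa su by (simp add: rdiff m_assoc)
    also have "\<dots> = \<zero>" using u1[symmetric] a sa by (simp add: diff_self)
    finally show ?thesis .
  qed
  have sw': "s w' = s a \<otimes> u \<otimes> s a \<ominus> s a" unfolding w'_def using a su uc s_s by (simp add: s_minus s_mult3)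
  have "s w' \<otimes> w' = s a \<otimes> u \<otimes> (s a \<otimes> w') \<ominus> s a \<otimes> w'" unfolding sw' using w'c sa uc by (simp add: ldiff m_assoc)
  also have "\<dots> = \<zero>" using saw sa uc by simp
  finally have "w' = \<zero>" using S_prop w'S by blast
  then have aua: "a \<otimes> s u \<otimes> a = a" unfolding w'_def using a su diff_eq0[of "a \<otimes> s u \<otimes> a" a] by simp
  define x where "x = s v \<otimes> a \<otimes> s u"
  have xS: "x \<in> S" unfolding x_def by (intro S_mult S_s aS uS vS)
  have m1: "a \<otimes> x \<otimes> a = a"
  proof -
    have "a \<otimes> x \<otimes> a = (a \<otimes> s v \<otimes> a) \<otimes> s u \<otimes> a" unfolding x_def using a sv su by (simp add: m_assoc)
    also have "\<dots> = a" using ava aua a su by (simp add: m_assoc)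
    finally show ?thesis .
  qed
  have m2: "x \<otimes> a \<otimes> x = x"
  proof -
    have "x \<otimes> a \<otimes> x = s v \<otimes> (a \<otimes> s u \<otimes> a) \<otimes> s v \<otimes> a \<otimes> s u" unfolding x_def using a sv su by (simp add: m_assoc)
    also have "\<dots> = s v \<otimes> (a \<otimes> s v \<otimes> a) \<otimes> s u" using aua a sv su by (simp add: m_assoc)
    also have "\<dots> = x" unfolding x_def using ava by simp
    finally show ?thesis .
  qed
  have ax: "a \<otimes> x = a \<otimes> s u"
    unfolding x_def using ava a sv su by (metis m_assoc m_closed)
  have "a \<otimes> s u = u \<otimes> s a \<otimes> a \<otimes> s u" using u by (rule arg_cong[where f="\<lambda>z. z \<otimes> s u"])
  also have "\<dots> = u \<otimes> s a" using u1 uc sa a su by (metis m_assoc m_closed)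
  finally have ausu: "a \<otimes> s u = u \<otimes> s a" .
  have m3: "s (a \<otimes> x) = a \<otimes> x"
    unfolding ax using ausu a uc su s_s s_closed[OF a] by (simp add: s_mult)
  have xa: "x \<otimes> a = s v \<otimes> a"
    unfolding x_def using aua a sv su by (metis m_assoc m_closed)
  have "s v \<otimes> a = s v \<otimes> a \<otimes> s a \<otimes> v" using v a sa sv vc by (metis m_assoc m_closed)
  also have "\<dots> = s a \<otimes> v" using v1 a sa sv vc by (metis m_assoc m_closed)
  finally have svav: "s v \<otimes> a = s a \<otimes> v" .
  have m4: "s (x \<otimes> a) = x \<otimes> a"
    unfolding xa using svav a vc sv s_s s_closed[OF a] by (simp add: s_mult)
  show ?thesis using xS m1 m2 m3 m4 unfolding MP_def by blast
qed

end

lemma adj_carrier: "A \<in> carrier_mat r c \<Longrightarrow> mat_adjoint A \<in> carrier_mat c r"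
  unfolding mat_adjoint_def by auto

lemma adj_dims[simp]: "dim_row (mat_adjoint A) = dim_col A" "dim_col (mat_adjoint A) = dim_row A"
  unfolding mat_adjoint_def by auto

lemma adj_index: "i < dim_col A \<Longrightarrow> j < dim_row A \<Longrightarrow> mat_adjoint A $$ (i, j) = cnj (A $$ (j, i))"
  unfolding mat_adjoint_def by (simp add: mat_of_rows_def)

lemma adj_adj: "mat_adjoint (mat_adjoint (A :: complex mat)) = A"
  by (rule eq_matI) (auto simp: adj_index)

lemma adj_add: "A \<in> carrier_mat r c \<Longrightarrow> B \<in> carrier_mat r c \<Longrightarrow>
   mat_adjoint (A + B) = mat_adjoint A + (mat_adjoint B :: complex mat)"
  by (rule eq_matI) (auto simp: adj_index)

lemma adj_uminus: "mat_adjoint (- A) = - (mat_adjoint A :: complex mat)"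
  by (rule eq_matI) (auto simp: adj_index)

lemma adj_mult: "A \<in> carrier_mat r c \<Longrightarrow> B \<in> carrier_mat c e \<Longrightarrow>
   mat_adjoint (A * B) = mat_adjoint B * (mat_adjoint A :: complex mat)"
proof (rule eq_matI)
  fix i j assume A: "A \<in> carrier_mat r c" and B: "B \<in> carrier_mat c e"
    and i: "i < dim_row (mat_adjoint B * mat_adjoint A)" and j: "j < dim_col (mat_adjoint B * mat_adjoint A)"
  have ij: "i < e" "j < r" using i j A B by auto
  have "mat_adjoint (A * B) $$ (i, j) = cnj ((A * B) $$ (j, i))" using ij A B by (simp add: adj_index)
  also have "\<dots> = cnj (\<Sum>l<c. A $$ (j, l) * B $$ (l, i))"
    using ij A B by (simp add: scalar_prod_def atLeast0LessThan)
  also have "\<dots> = (\<Sum>l<c. cnj (B $$ (l, i)) * cnj (A $$ (j, l)))"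
    by (simp add: cnj_sum mult.commute)
  also have "\<dots> = (mat_adjoint B * mat_adjoint A) $$ (i, j)"
    using ij A B by (simp add: scalar_prod_def atLeast0LessThan adj_index)
  finally show "mat_adjoint (A * B) $$ (i, j) = (mat_adjoint B * mat_adjoint A) $$ (i, j)" .
qed auto

lemma adj_zero: "mat_adjoint (0\<^sub>m r c :: complex mat) = 0\<^sub>m c r"
  by (rule eq_matI) (auto simp: adj_index)

lemma adj_one: "mat_adjoint (1\<^sub>m n :: complex mat) = 1\<^sub>m n"
  by (rule eq_matI) (auto simp: adj_index)

lemma mrank_alt: "A \<in> carrier_mat k m \<Longrightarrow> mrank A = vec_space.rank k A"
  unfolding mrank_def by simp

lemma mrank_mult_left:
  assumes A: "A \<in> carrier_mat k k" and B: "(B :: complex mat) \<in> carrier_mat k k"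
  shows "mrank (A * B) \<le> mrank A"
proof -
  obtain C D where C: "C \<in> carrier_mat k (mrank A)" and D: "D \<in> carrier_mat (mrank A) k" and e: "A = C * D"
    using vec_space.rank_factor[OF A] A unfolding mrank_def by auto
  have "A * B = C * (D * B)" using e C D B by (simp add: assoc_mult_mat)
  moreover have "A * B \<in> carrier_mat k k" using A B by auto
  moreover have "D * B \<in> carrier_mat (mrank A) k" using D B by auto
  ultimately show ?thesis using vec_space.rank_mult_le[OF C, of "D * B" k] mrank_alt by metis
qed

lemma mrank_mult_right:
  assumes A: "A \<in> carrier_mat k k" and B: "(B :: complex mat) \<in> carrier_mat k k"
  shows "mrank (A * B) \<le> mrank B"
proof -
  obtain C D where C: "C \<in> carrier_mat k (mrank B)" and D: "D \<in> carrier_mat (mrank B) k" and e: "B = C * D"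
    using vec_space.rank_factor[OF B] B unfolding mrank_def by auto
  have "A * B = (A * C) * D" using e C D A by (simp add: assoc_mult_mat)
  moreover have "A * C \<in> carrier_mat k (mrank B)" using A C by auto
  moreover have "A * B \<in> carrier_mat k k" using A B by auto
  ultimately show ?thesis using vec_space.rank_mult_le[of "A * C" k "mrank B" D k] D mrank_alt by metis
qed

lemma mrank_adj:
  assumes A: "(A :: complex mat) \<in> carrier_mat k k"
  shows "mrank (mat_adjoint A) \<le> mrank A"
proof -
  obtain C D where C: "C \<in> carrier_mat k (mrank A)" and D: "D \<in> carrier_mat (mrank A) k" and e: "A = C * D"
    using vec_space.rank_factor[OF A] A unfolding mrank_def by auto
  have "mat_adjoint A = mat_adjoint D * mat_adjoint C" using e C D adj_mult by metis
  moreover have "mat_adjoint D \<in> carrier_mat k (mrank A)" "mat_adjoint C \<in> carrier_mat (mrank A) k"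
    using C D adj_carrier by auto
  moreover have "mat_adjoint A \<in> carrier_mat k k" using A adj_carrier by auto
  ultimately show ?thesis using vec_space.rank_mult_le[of "mat_adjoint D" k "mrank A" "mat_adjoint C" k] mrank_alt by metis
qed

lemma mrank_add:
  assumes A: "A \<in> carrier_mat k k" and B: "(B :: complex mat) \<in> carrier_mat k k"
  shows "mrank (A + B) \<le> mrank A + mrank B"
  unfolding mrank_def using vec_space.rank_subadditive[OF A B] A B by simp

lemma mrank_uminus:
  assumes A: "(A :: complex mat) \<in> carrier_mat k k"
  shows "mrank (- A) \<le> mrank A"
proof -
  obtain C D where C: "C \<in> carrier_mat k (mrank A)" and D: "D \<in> carrier_mat (mrank A) k" and e: "A = C * D"
    using vec_space.rank_factor[OF A] A unfolding mrank_def by auto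
  have "- A = C * (- D)" using e C D by simp
  moreover have "- A \<in> carrier_mat k k" using A by auto
  moreover have "- D \<in> carrier_mat (mrank A) k" using D by auto
  ultimately show ?thesis using vec_space.rank_mult_le[OF C, of "- D" k] mrank_alt by metis
qed

lemma mrank_zero: "mrank (0\<^sub>m k k :: complex mat) = 0"
  unfolding mrank_def using vec_space.rank_0I by simp


lemma P_simps:
  "carrier (prod_mat_ring d) = {a. \<forall>n. a n \<in> carrier_mat (d n) (d n)}"
  "a \<otimes>\<^bsub>prod_mat_ring d\<^esub> b = (\<lambda>n. a n * b n)"
  "a \<oplus>\<^bsub>prod_mat_ring d\<^esub> b = (\<lambda>n. a n + b n)"
  "\<one>\<^bsub>prod_mat_ring d\<^esub> = (\<lambda>n. 1\<^sub>m (d n))"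
  "\<zero>\<^bsub>prod_mat_ring d\<^esub> = (\<lambda>n. 0\<^sub>m (d n) (d n))"
  unfolding prod_mat_ring_def by simp_all

lemma P_ring: "ring (prod_mat_ring d)"
proof (rule ringI)
  show "abelian_group (prod_mat_ring d)"
  proof (rule abelian_groupI)
    fix x assume x: "x \<in> carrier (prod_mat_ring d)"
    show "\<exists>y\<in>carrier (prod_mat_ring d). y \<oplus>\<^bsub>prod_mat_ring d\<^esub> x = \<zero>\<^bsub>prod_mat_ring d\<^esub>"
      by (rule bexI[of _ "\<lambda>n. - x n"]) (use x in \<open>auto simp: P_simps\<close>)
  next
    fix x y z assume "x \<in> carrier (prod_mat_ring d)" "y \<in> carrier (prod_mat_ring d)" "z \<in> carrier (prod_mat_ring d)"
    then show "x \<oplus>\<^bsub>prod_mat_ring d\<^esub> y \<oplus>\<^bsub>prod_mat_ring d\<^esub> z = x \<oplus>\<^bsub>prod_mat_ring d\<^esub> (y \<oplus>\<^bsub>prod_mat_ring d\<^esub> z)"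
      by (simp add: P_simps fun_eq_iff) (metis assoc_add_mat)
  next
    fix x y assume "x \<in> carrier (prod_mat_ring d)" "y \<in> carrier (prod_mat_ring d)"
    then show "x \<oplus>\<^bsub>prod_mat_ring d\<^esub> y = y \<oplus>\<^bsub>prod_mat_ring d\<^esub> x"
      by (simp add: P_simps fun_eq_iff) (metis comm_add_mat)
  qed (auto simp: P_simps)
  show "monoid (prod_mat_ring d)"
  proof (rule monoidI)
    fix x y z assume "x \<in> carrier (prod_mat_ring d)" "y \<in> carrier (prod_mat_ring d)" "z \<in> carrier (prod_mat_ring d)"
    then show "x \<otimes>\<^bsub>prod_mat_ring d\<^esub> y \<otimes>\<^bsub>prod_mat_ring d\<^esub> z = x \<otimes>\<^bsub>prod_mat_ring d\<^esub> (y \<otimes>\<^bsub>prod_mat_ring d\<^esub> z)"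
      by (simp add: P_simps fun_eq_iff) (metis assoc_mult_mat)
  qed (auto simp: P_simps fun_eq_iff intro: mult_carrier_mat[of _ "d _" "d _" _ "d _"] left_mult_one_mat right_mult_one_mat)
next
  fix x y z assume "x \<in> carrier (prod_mat_ring d)" "y \<in> carrier (prod_mat_ring d)" "z \<in> carrier (prod_mat_ring d)"
  then show "(x \<oplus>\<^bsub>prod_mat_ring d\<^esub> y) \<otimes>\<^bsub>prod_mat_ring d\<^esub> z = x \<otimes>\<^bsub>prod_mat_ring d\<^esub> z \<oplus>\<^bsub>prod_mat_ring d\<^esub> y \<otimes>\<^bsub>prod_mat_ring d\<^esub> z"
    by (simp add: P_simps fun_eq_iff) (metis add_mult_distrib_mat)
next
  fix x y z assume "x \<in> carrier (prod_mat_ring d)" "y \<in> carrier (prod_mat_ring d)" "z \<in> carrier (prod_mat_ring d)"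
  then show "z \<otimes>\<^bsub>prod_mat_ring d\<^esub> (x \<oplus>\<^bsub>prod_mat_ring d\<^esub> y) = z \<otimes>\<^bsub>prod_mat_ring d\<^esub> x \<oplus>\<^bsub>prod_mat_ring d\<^esub> z \<otimes>\<^bsub>prod_mat_ring d\<^esub> y"
    by (simp add: P_simps fun_eq_iff) (metis mult_add_distrib_mat)
qed


definition nr :: "(nat \<Rightarrow> nat) \<Rightarrow> (nat \<Rightarrow> complex mat) \<Rightarrow> nat \<Rightarrow> real" where
  "nr d a n = real (mrank (a n)) / real (d n)"

lemma null_ideal_alt: "null_ideal \<omega> d = {a \<in> carrier (prod_mat_ring d). (nr d a \<longlongrightarrow> 0) \<omega>}"
  unfolding null_ideal_def nr_def by simp

lemma nr_nonneg: "0 \<le> nr d a n" unfolding nr_def by simp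

lemma nr_mono: "mrank (b n) \<le> mrank (a n) \<Longrightarrow> nr d b n \<le> nr d a n"
  unfolding nr_def by (simp add: divide_right_mono)

lemma nr_mono2: "mrank (b n) \<le> mrank (a n) + mrank (c n) \<Longrightarrow> nr d b n \<le> nr d a n + nr d c n"
  unfolding nr_def by (simp add: divide_right_mono flip: add_divide_distrib)

lemma tend_le:
  assumes "(f \<longlongrightarrow> 0) F" and "\<And>n. g n \<le> (f n :: real)" and "\<And>n. 0 \<le> g n"
  shows "(g \<longlongrightarrow> 0) F"
  by (rule tendsto_sandwich[of "\<lambda>_. 0" g F f 0]) (use assms in auto)

lemma P_ainv: "a \<in> carrier (prod_mat_ring d) \<Longrightarrow> \<ominus>\<^bsub>prod_mat_ring d\<^esub> a = (\<lambda>n. - a n)"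
proof -
  assume a: "a \<in> carrier (prod_mat_ring d)"
  interpret ring "prod_mat_ring d" by (rule P_ring)
  have c: "(\<lambda>n. - a n) \<in> carrier (prod_mat_ring d)" using a by (auto simp: P_simps)
  have "(\<lambda>n. - a n) \<oplus>\<^bsub>prod_mat_ring d\<^esub> a = \<zero>\<^bsub>prod_mat_ring d\<^esub>" using a by (auto simp: P_simps fun_eq_iff)
  then show ?thesis using minus_equality[OF _ a c] by simp
qed

lemma null_ideal_ideal: "ideal (null_ideal \<omega> d) (prod_mat_ring d)"
proof -
  let ?P = "prod_mat_ring d"
  let ?I = "null_ideal \<omega> d"
  interpret ring ?P by (rule P_ring)
  have Isub: "?I \<subseteq> carrier ?P" unfolding null_ideal_alt by auto
  have mem: "a \<in> ?I" if "a \<in> carrier ?P" "(nr d a \<longlongrightarrow> 0) \<omega>" for a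
    using that unfolding null_ideal_alt by auto
  have memD: "a \<in> carrier ?P" "(nr d a \<longlongrightarrow> 0) \<omega>" if "a \<in> ?I" for a
    using that unfolding null_ideal_alt by auto
  have cD: "a n \<in> carrier_mat (d n) (d n)" if "a \<in> carrier ?P" for a n using that by (auto simp: P_simps)
  show ?thesis
  proof (rule idealI)
    show "ring ?P" by (rule P_ring)
    show "subgroup ?I (add_monoid ?P)"
    proof (rule group.subgroupI[OF a_group])
      show "?I \<subseteq> carrier (add_monoid ?P)" using Isub by simp
      have "\<zero>\<^bsub>?P\<^esub> \<in> ?I"
      proof (rule mem)
        show "\<zero>\<^bsub>?P\<^esub> \<in> carrier ?P" by simp
        have "nr d \<zero>\<^bsub>?P\<^esub> = (\<lambda>n. 0)" by (auto simp: P_simps nr_def fun_eq_iff mrank_zero)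
        then show "(nr d \<zero>\<^bsub>?P\<^esub> \<longlongrightarrow> 0) \<omega>" by simp
      qed
      then show "?I \<noteq> {}" by blast
    next
      fix a assume a: "a \<in> ?I"
      have ac: "a \<in> carrier ?P" using memD[OF a] by simp
      have "inv\<^bsub>add_monoid ?P\<^esub> a = \<ominus>\<^bsub>?P\<^esub> a" by (simp add: a_inv_def)
      also have "\<dots> = (\<lambda>n. - a n)" using P_ainv ac by simp
      finally have e: "inv\<^bsub>add_monoid ?P\<^esub> a = (\<lambda>n. - a n)" .
      have "(\<lambda>n. - a n) \<in> ?I"
      proof (rule mem)
        show "(\<lambda>n. - a n) \<in> carrier ?P" using ac by (auto simp: P_simps)
        show "(nr d (\<lambda>n. - a n) \<longlongrightarrow> 0) \<omega>"
          by (rule tend_le[OF memD(2)[OF a]]) (auto intro!: nr_mono mrank_uminus cD[OF ac] simp: nr_nonneg)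
      qed
      then show "inv\<^bsub>add_monoid ?P\<^esub> a \<in> ?I" using e by simp
    next
      fix a b assume a: "a \<in> ?I" and b: "b \<in> ?I"
      have ac: "a \<in> carrier ?P" and bc: "b \<in> carrier ?P" using memD a b by auto
      have "a \<oplus>\<^bsub>?P\<^esub> b \<in> ?I"
      proof (rule mem)
        show "a \<oplus>\<^bsub>?P\<^esub> b \<in> carrier ?P" using ac bc by simp
        show "(nr d (a \<oplus>\<^bsub>?P\<^esub> b) \<longlongrightarrow> 0) \<omega>"
          by (rule tend_le[OF tendsto_add_zero[OF memD(2)[OF a] memD(2)[OF b]]])
             (auto intro!: nr_mono2 mrank_add cD[OF ac] cD[OF bc] simp: nr_nonneg P_simps)
      qed
      then show "a \<otimes>\<^bsub>add_monoid ?P\<^esub> b \<in> ?I" by simp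
    qed
  next
    fix a x assume a: "a \<in> ?I" and x: "x \<in> carrier ?P"
    have ac: "a \<in> carrier ?P" using memD a by auto
    show "x \<otimes>\<^bsub>?P\<^esub> a \<in> ?I"
    proof (rule mem)
      show "x \<otimes>\<^bsub>?P\<^esub> a \<in> carrier ?P" using ac x by simp
      show "(nr d (x \<otimes>\<^bsub>?P\<^esub> a) \<longlongrightarrow> 0) \<omega>"
        by (rule tend_le[OF memD(2)[OF a]])
           (auto intro!: nr_mono mrank_mult_right cD[OF ac] cD[OF x] simp: nr_nonneg P_simps)
    qed
    show "a \<otimes>\<^bsub>?P\<^esub> x \<in> ?I"
    proof (rule mem)
      show "a \<otimes>\<^bsub>?P\<^esub> x \<in> carrier ?P" using ac x by simp
      show "(nr d (a \<otimes>\<^bsub>?P\<^esub> x) \<longlongrightarrow> 0) \<omega>"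
        by (rule tend_le[OF memD(2)[OF a]])
           (auto intro!: nr_mono mrank_mult_left cD[OF ac] cD[OF x] simp: nr_nonneg P_simps)
    qed
  qed
qed


definition astar :: "(nat \<Rightarrow> complex mat) \<Rightarrow> (nat \<Rightarrow> complex mat)" where
  "astar a = (\<lambda>n. mat_adjoint (a n))"

lemma alg_star_astar: "alg_star X = astar ` X"
  unfolding alg_star_def astar_def by simp

lemma astar_carrier: "a \<in> carrier (prod_mat_ring d) \<Longrightarrow> astar a \<in> carrier (prod_mat_ring d)"
  by (auto simp: P_simps astar_def adj_carrier)

lemma astar_astar: "astar (astar a) = a"
  by (simp add: astar_def adj_adj)

lemma astar_add: "a \<in> carrier (prod_mat_ring d) \<Longrightarrow> b \<in> carrier (prod_mat_ring d) \<Longrightarrow>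
   astar (a \<oplus>\<^bsub>prod_mat_ring d\<^esub> b) = astar a \<oplus>\<^bsub>prod_mat_ring d\<^esub> astar b"
  by (auto simp: P_simps astar_def fun_eq_iff intro: adj_add)

lemma astar_mult: "a \<in> carrier (prod_mat_ring d) \<Longrightarrow> b \<in> carrier (prod_mat_ring d) \<Longrightarrow>
   astar (a \<otimes>\<^bsub>prod_mat_ring d\<^esub> b) = astar b \<otimes>\<^bsub>prod_mat_ring d\<^esub> astar a"
  by (auto simp: P_simps astar_def fun_eq_iff intro: adj_mult)

lemma astar_I: "a \<in> null_ideal \<omega> d \<Longrightarrow> astar a \<in> null_ideal \<omega> d"
proof -
  assume a: "a \<in> null_ideal \<omega> d"
  have ac: "a \<in> carrier (prod_mat_ring d)" and t: "(nr d a \<longlongrightarrow> 0) \<omega>" using a unfolding null_ideal_alt by auto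
  have cD: "a n \<in> carrier_mat (d n) (d n)" for n using ac by (auto simp: P_simps)
  have "(nr d (astar a) \<longlongrightarrow> 0) \<omega>"
    by (rule tend_le[OF t]) (auto intro!: nr_mono mrank_adj cD simp: nr_nonneg astar_def)
  then show ?thesis using astar_carrier[OF ac] unfolding null_ideal_alt by auto
qed

lemma coset_star:
  assumes a: "a \<in> carrier (prod_mat_ring d)"
  shows "alg_star (null_ideal \<omega> d +>\<^bsub>prod_mat_ring d\<^esub> a) = null_ideal \<omega> d +>\<^bsub>prod_mat_ring d\<^esub> astar a"
proof -
  let ?P = "prod_mat_ring d" and ?I = "null_ideal \<omega> d"
  have Ic: "h \<in> carrier ?P" if "h \<in> ?I" for h using that unfolding null_ideal_alt by auto
  have "alg_star (?I +>\<^bsub>?P\<^esub> a) = (\<Union>h\<in>?I. {astar (h \<oplus>\<^bsub>?P\<^esub> a)})"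
    unfolding alg_star_astar a_r_coset_def' by auto
  also have "\<dots> = (\<Union>h\<in>?I. {astar h \<oplus>\<^bsub>?P\<^esub> astar a})"
    using astar_add[OF Ic a] by auto
  also have "\<dots> = (\<Union>h\<in>?I. {h \<oplus>\<^bsub>?P\<^esub> astar a})"
  proof (intro equalityI subsetI)
    fix z assume "z \<in> (\<Union>h\<in>?I. {astar h \<oplus>\<^bsub>?P\<^esub> astar a})"
    then show "z \<in> (\<Union>h\<in>?I. {h \<oplus>\<^bsub>?P\<^esub> astar a})" using astar_I by blast
  next
    fix z assume "z \<in> (\<Union>h\<in>?I. {h \<oplus>\<^bsub>?P\<^esub> astar a})"
    then obtain h where h: "h \<in> ?I" "z = h \<oplus>\<^bsub>?P\<^esub> astar a" by auto
    then have "z = astar (astar h) \<oplus>\<^bsub>?P\<^esub> astar a" by (simp add: astar_astar)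
    then show "z \<in> (\<Union>h\<in>?I. {astar h \<oplus>\<^bsub>?P\<^esub> astar a})" using astar_I[OF h(1)] by blast
  qed
  also have "\<dots> = ?I +>\<^bsub>?P\<^esub> astar a" unfolding a_r_coset_def' by auto
  finally show ?thesis .
qed

lemma M_simps:
  "carrier (M_alg \<omega> d) = a_rcosets\<^bsub>prod_mat_ring d\<^esub> (null_ideal \<omega> d)"
  "X \<otimes>\<^bsub>M_alg \<omega> d\<^esub> Y = rcoset_mult (prod_mat_ring d) (null_ideal \<omega> d) X Y"
  "X \<oplus>\<^bsub>M_alg \<omega> d\<^esub> Y = X <+>\<^bsub>prod_mat_ring d\<^esub> Y"
  unfolding M_alg_def FactRing_def by simp_all

lemma M_carrierE:
  assumes "X \<in> carrier (M_alg \<omega> d)"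
  obtains a where "a \<in> carrier (prod_mat_ring d)" "X = null_ideal \<omega> d +>\<^bsub>prod_mat_ring d\<^esub> a"
  using assms unfolding M_simps A_RCOSETS_def' by auto

lemma M_srng: "srng (M_alg \<omega> d) alg_star"
proof -
  let ?P = "prod_mat_ring d" and ?I = "null_ideal \<omega> d" and ?M = "M_alg \<omega> d"
  interpret I: ideal ?I ?P by (rule null_ideal_ideal)
  have rM: "ring ?M" unfolding M_alg_def by (rule I.quotient_is_ring)
  have cosM: "?I +>\<^bsub>?P\<^esub> a \<in> carrier ?M" if "a \<in> carrier ?P" for a
    using that unfolding M_simps A_RCOSETS_def' by auto
  show ?thesis
  proof (rule srng.intro[OF rM], unfold_locales)
    fix X assume "X \<in> carrier ?M"
    then obtain a where a: "a \<in> carrier ?P" "X = ?I +>\<^bsub>?P\<^esub> a" by (rule M_carrierE)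
    show "alg_star X \<in> carrier ?M" using a coset_star cosM astar_carrier by metis
    show "alg_star (alg_star X) = X" using a coset_star astar_carrier astar_astar by metis
  next
    fix X Y assume "X \<in> carrier ?M" "Y \<in> carrier ?M"
    then obtain a b where a: "a \<in> carrier ?P" "X = ?I +>\<^bsub>?P\<^esub> a"
      and b: "b \<in> carrier ?P" "Y = ?I +>\<^bsub>?P\<^esub> b" by (metis M_carrierE)
    have sa: "astar a \<in> carrier ?P" and sb: "astar b \<in> carrier ?P" using a b astar_carrier by auto
    have "alg_star (X \<otimes>\<^bsub>?M\<^esub> Y) = alg_star (?I +>\<^bsub>?P\<^esub> (a \<otimes>\<^bsub>?P\<^esub> b))"
      unfolding M_simps a b using I.rcoset_mult_add a b by simp
    also have "\<dots> = ?I +>\<^bsub>?P\<^esub> (astar b \<otimes>\<^bsub>?P\<^esub> astar a)"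
      using coset_star a b astar_mult by (metis I.m_closed)
    also have "\<dots> = alg_star Y \<otimes>\<^bsub>?M\<^esub> alg_star X"
      unfolding M_simps a b using coset_star[OF a(1)] coset_star[OF b(1)] I.rcoset_mult_add[OF sb sa] by simp
    finally show "alg_star (X \<otimes>\<^bsub>?M\<^esub> Y) = alg_star Y \<otimes>\<^bsub>?M\<^esub> alg_star X" .
    have "alg_star (X \<oplus>\<^bsub>?M\<^esub> Y) = alg_star (?I +>\<^bsub>?P\<^esub> (a \<oplus>\<^bsub>?P\<^esub> b))"
      unfolding M_simps a b using I.a_rcos_sum a b by simp
    also have "\<dots> = ?I +>\<^bsub>?P\<^esub> (astar a \<oplus>\<^bsub>?P\<^esub> astar b)"
      using coset_star a b astar_add by (metis I.a_closed)
    also have "\<dots> = alg_star X \<oplus>\<^bsub>?M\<^esub> alg_star Y"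
      unfolding M_simps a b using coset_star[OF a(1)] coset_star[OF b(1)] I.a_rcos_sum[OF sa sb] by simp
    finally show "alg_star (X \<oplus>\<^bsub>?M\<^esub> Y) = alg_star X \<oplus>\<^bsub>?M\<^esub> alg_star Y" .
  qed
qed


theorem mainTheorem3:
  fixes \<omega> :: "nat filter" and d :: "nat \<Rightarrow> nat"
    and R :: "'i \<Rightarrow> (nat \<Rightarrow> complex mat) set set" and I :: "'i set"
  assumes "is_ultrafilter \<omega>" and "nonprincipal \<omega>"
    and "\<And>n. d n > 0"
    and "I \<noteq> {}"
    and "\<And>i. i \<in> I \<Longrightarrow> star_regular_subring \<omega> d (R i)"
  shows "star_regular_subring \<omega> d (\<Inter>i\<in>I. R i)"
proof -
  let ?M = "M_alg \<omega> d" and ?T = "\<Inter>i\<in>I. R i"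
  interpret srng ?M alg_star by (rule M_srng)
  have sr: "sreg ?M alg_star (R i)" if "i \<in> I" for i
    using assms(5)[OF that] M_srng unfolding star_regular_subring_def sreg_def sreg_axioms_def by auto
  have subR: "subring (R i) ?M" if "i \<in> I" for i using sr[OF that] sreg.S_sub by blast
  obtain i0 where i0: "i0 \<in> I" using assms(4) by blast
  have Tsub: "subring ?T ?M"
    using subring_Inter[of "R ` I"] subR assms(4) by auto
  have TC: "x \<in> carrier ?M" if "x \<in> ?T" for x using that sreg.SC[OF sr[OF i0]] i0 by blast
  have Tmult: "x \<otimes>\<^bsub>?M\<^esub> y \<in> ?T" if "x \<in> ?T" "y \<in> ?T" for x y
    using that subringE(6)[OF Tsub] by blast
  have "vN_regular_sub ?M ?T"
    unfolding vN_regular_sub_def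
  proof
    fix a assume aT: "a \<in> ?T"
    have ac: "a \<in> carrier ?M" using TC aT .
    obtain x where x0: "x \<in> R i0" and mx: "MP a x" using sreg.S_MP[OF sr[OF i0]] aT i0 by blast
    have xc: "x \<in> carrier ?M" using sreg.SC[OF sr[OF i0] x0] .
    have xT: "x \<in> ?T"
    proof
      fix i assume i: "i \<in> I"
      obtain y where y: "y \<in> R i" and my: "MP a y" using sreg.S_MP[OF sr[OF i]] aT i by blast
      have "x = y" using MP_unique[OF ac xc sreg.SC[OF sr[OF i] y] mx my] .
      then show "x \<in> R i" using y by simp
    qed
    have axa: "a \<otimes>\<^bsub>?M\<^esub> x \<otimes>\<^bsub>?M\<^esub> a = a" using mx unfolding MP_def by simp
    define e where "e = a \<otimes>\<^bsub>?M\<^esub> x"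
    have eT: "e \<in> ?T" unfolding e_def using Tmult aT xT by blast
    have ee: "e \<otimes>\<^bsub>?M\<^esub> e = e" unfolding e_def using axa ac xc by (simp flip: m_assoc)
    have "{a \<otimes>\<^bsub>?M\<^esub> r | r. r \<in> ?T} = {e \<otimes>\<^bsub>?M\<^esub> r | r. r \<in> ?T}"
    proof (intro equalityI subsetI)
      fix z assume "z \<in> {a \<otimes>\<^bsub>?M\<^esub> r | r. r \<in> ?T}"
      then obtain r where r: "r \<in> ?T" "z = a \<otimes>\<^bsub>?M\<^esub> r" by blast
      have rc: "r \<in> carrier ?M" using TC r(1) .
      have "z = (a \<otimes>\<^bsub>?M\<^esub> x \<otimes>\<^bsub>?M\<^esub> a) \<otimes>\<^bsub>?M\<^esub> r" using r(2) axa by simp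
      also have "\<dots> = e \<otimes>\<^bsub>?M\<^esub> (a \<otimes>\<^bsub>?M\<^esub> r)" unfolding e_def using ac xc rc by (simp add: m_assoc)
      finally have "z = e \<otimes>\<^bsub>?M\<^esub> (a \<otimes>\<^bsub>?M\<^esub> r)" .
      moreover have "a \<otimes>\<^bsub>?M\<^esub> r \<in> ?T" using Tmult aT r(1) by blast
      ultimately show "z \<in> {e \<otimes>\<^bsub>?M\<^esub> r | r. r \<in> ?T}" by blast
    next
      fix z assume "z \<in> {e \<otimes>\<^bsub>?M\<^esub> r | r. r \<in> ?T}"
      then obtain r where r: "r \<in> ?T" "z = e \<otimes>\<^bsub>?M\<^esub> r" by blast
      have rc: "r \<in> carrier ?M" using TC r(1) .
      have "z = a \<otimes>\<^bsub>?M\<^esub> (x \<otimes>\<^bsub>?M\<^esub> r)" unfolding r(2) e_def using ac xc rc by (simp add: m_assoc)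
      moreover have "x \<otimes>\<^bsub>?M\<^esub> r \<in> ?T" using Tmult xT r(1) by blast
      ultimately show "z \<in> {a \<otimes>\<^bsub>?M\<^esub> r | r. r \<in> ?T}" by blast
    qed
    then show "\<exists>e\<in>?T. e \<otimes>\<^bsub>?M\<^esub> e = e \<and> {a \<otimes>\<^bsub>?M\<^esub> r | r. r \<in> ?T} = {e \<otimes>\<^bsub>?M\<^esub> r | r. r \<in> ?T}"
      using eT ee by blast
  qed
  moreover have "\<forall>x\<in>?T. alg_star x \<in> ?T"
    using assms(5) unfolding star_regular_subring_def by blast
  moreover have "\<forall>x\<in>?T. alg_star x \<otimes>\<^bsub>?M\<^esub> x = \<zero>\<^bsub>?M\<^esub> \<longrightarrow> x = \<zero>\<^bsub>?M\<^esub>"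
    using assms(5)[OF i0] i0 unfolding star_regular_subring_def by blast
  ultimately show ?thesis unfolding star_regular_subring_def using Tsub by blast
qed


end
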